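(* Let $\mathbb{C}$ be a partial category. Then the family $\mathscr{N}$ of all morphisms $\mathrm{id}_A{\downarrow}U:U\to A$, for objects $U\le A$, is an inclusion system on $\mathbb{C}$.
   Context: Composition is diagrammatic. A partial category is a category with a partial order $\le$ on objects, a restriction operator $(U\le A,\ f:A\to B)\mapsto f{\downarrow}U:U\to B$, and a contraction operator $(V\le B,\ f:A\to B)\mapsto$ an object $A{\uparrow}_fV\le A$ and a morphism $f{\uparrow}V:A{\uparrow}_fV\to V$, satisfying: (P.1) $f{\downarrow}A=f$; (P.2) $(f{\downarrow}U){\downarrow}V=f{\downarrow}V$ for $V\le U\le A$; (P.3) $(f{\downarrow}U)g=(fg){\downarrow}U$; (P.4) $A{\uparrow}_fB=A$, $f{\uparrow}B=f$; (P.4') $A{\uparrow}_{\mathrm{id}_A}U=U$, $\mathrm{id}_A{\uparrow}U=\mathrm{id}_U$ for $U\le A$; (P.5) for $W\le V\le B$: $(A{\uparrow}_fV){\uparrow}_{f{\uparrow}V}W=A{\uparrow}_fW$ and $(f{\uparrow}V){\uparrow}W=f{\uparrow}W$; (P.6) for $g:B\to C$, $W\le C$: $A{\uparrow}_f(B{\uparrow}_gW)=A{\uparrow}_{fg}W$ and $(f{\uparrow}(B{\uparrow}_gW))(g{\uparrow}W)=(fg){\uparrow}W$; (P.7) $(A{\uparrow}_fV){\uparrow}_{f{\downarrow}(A{\uparrow}_fV)}V=A{\uparrow}_fV$ and $(f{\downarrow}(A{\uparrow}_fV)){\uparrow}V=f{\uparrow}V$; (P.8) $(fg){\downarrow}(A{\uparrow}_fV)=(f{\uparrow}V)(g{\downarrow}V)$.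 An inclusion system on a category is a family $\mathscr{N}$ of morphisms such that (I.1) identities belong to $\mathscr{N}$; (I.2) every member of $\mathscr{N}$ is monic; (I.3) any two parallel members of $\mathscr{N}$ are equal; (I.4) $\mathscr{N}$ is closed under composition; (I.5) for every $m:A\to B$ in $\mathscr{N}$ and every $f:C\to B$, a pullback of $m$ along $f$ exists and its leg $m':D\to C$ belongs to $\mathscr{N}$. *)

theory Defs
  imports Main
begin

text \<open>A (small) category presented by its object set, arrow set, domain,
codomain, identities and a composition written diagrammatically:
cmp f g is "first f, then g", defined when cod f = dom g.\<close>

record ('o, 'm) cat =
  Ob  :: "'o set"
  Ar  :: "'m set"
  Dom :: "'m \<Rightarrow> 'o"
  Cod :: "'m \<Rightarrow> 'o"
  Cmp :: "'m \<Rightarrow> 'm \<Rightarrow> 'm"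
  Id  :: "'o \<Rightarrow> 'm"

definition hom :: "('o, 'm, 'x) cat_scheme \<Rightarrow> 'o \<Rightarrow> 'o \<Rightarrow> 'm set" where
  "hom C A B = {f \<in> Ar C. Dom C f = A \<and> Cod C f = B}"

definition category :: "('o, 'm, 'x) cat_scheme \<Rightarrow> bool" where
  "category C \<longleftrightarrow>
     (\<forall>f\<in>Ar C. Dom C f \<in> Ob C \<and> Cod C f \<in> Ob C)
   \<and> (\<forall>A\<in>Ob C. Id C A \<in> hom C A A)
   \<and> (\<forall>f\<in>Ar C. \<forall>g\<in>Ar C. Cod C f = Dom C g \<longrightarrow> Cmp C f g \<in> hom C (Dom C f) (Cod C g))
   \<and> (\<forall>f\<in>Ar C. Cmp C (Id C (Dom C f)) f = f \<and> Cmp C f (Id C (Cod C f)) = f)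
   \<and> (\<forall>f\<in>Ar C. \<forall>g\<in>Ar C. \<forall>h\<in>Ar C. Cod C f = Dom C g \<longrightarrow> Cod C g = Dom C h \<longrightarrow>
        Cmp C (Cmp C f g) h = Cmp C f (Cmp C g h))"

text \<open>Partial category: order Le on objects, restriction Res f U = f restricted to U,
contraction object CObj f V = A contracted along f to V, contraction morphism CMor f V = f contracted to V.\<close>

record ('o, 'm) pcat = "('o, 'm) cat" +
  Le   :: "'o \<Rightarrow> 'o \<Rightarrow> bool"
  Res  :: "'m \<Rightarrow> 'o \<Rightarrow> 'm"
  CObj :: "'m \<Rightarrow> 'o \<Rightarrow> 'o"
  CMor :: "'m \<Rightarrow> 'o \<Rightarrow> 'm"

definition partial_category :: "('o, 'm, 'x) pcat_scheme \<Rightarrow> bool" where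
  "partial_category C \<longleftrightarrow> category C
   \<comment> \<open>partial order on objects\<close>
   \<and> (\<forall>A\<in>Ob C. Le C A A)
   \<and> (\<forall>A\<in>Ob C. \<forall>B\<in>Ob C. Le C A B \<and> Le C B A \<longrightarrow> A = B)
   \<and> (\<forall>A\<in>Ob C. \<forall>B\<in>Ob C. \<forall>D\<in>Ob C. Le C A B \<and> Le C B D \<longrightarrow> Le C A D)
   \<comment> \<open>typing of restriction\<close>
   \<and> (\<forall>A\<in>Ob C. \<forall>B\<in>Ob C. \<forall>U\<in>Ob C. \<forall>f\<in>hom C A B. Le C U A \<longrightarrow> Res C f U \<in> hom C U B)
   \<comment> \<open>typing of contraction\<close>
   \<and> (\<forall>A\<in>Ob C. \<forall>B\<in>Ob C. \<forall>V\<in>Ob C. \<forall>f\<in>hom C A B. Le C V B \<longrightarrow>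
        CObj C f V \<in> Ob C \<and> Le C (CObj C f V) A \<and> CMor C f V \<in> hom C (CObj C f V) V)
   \<comment> \<open>P.1\<close>
   \<and> (\<forall>A\<in>Ob C. \<forall>B\<in>Ob C. \<forall>f\<in>hom C A B. Res C f A = f)
   \<comment> \<open>P.2\<close>
   \<and> (\<forall>A\<in>Ob C. \<forall>B\<in>Ob C. \<forall>U\<in>Ob C. \<forall>V\<in>Ob C. \<forall>f\<in>hom C A B.
        Le C V U \<and> Le C U A \<longrightarrow> Res C (Res C f U) V = Res C f V)
   \<comment> \<open>P.3\<close>
   \<and> (\<forall>A\<in>Ob C. \<forall>B\<in>Ob C. \<forall>D\<in>Ob C. \<forall>U\<in>Ob C. \<forall>f\<in>hom C A B. \<forall>g\<in>hom C B D.
        Le C U A \<longrightarrow> Cmp C (Res C f U) g = Res C (Cmp C f g) U)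
   \<comment> \<open>P.4\<close>
   \<and> (\<forall>A\<in>Ob C. \<forall>B\<in>Ob C. \<forall>f\<in>hom C A B. CObj C f B = A \<and> CMor C f B = f)
   \<comment> \<open>P.4'\<close>
   \<and> (\<forall>A\<in>Ob C. \<forall>U\<in>Ob C. Le C U A \<longrightarrow>
        CObj C (Id C A) U = U \<and> CMor C (Id C A) U = Id C U)
   \<comment> \<open>P.5\<close>
   \<and> (\<forall>A\<in>Ob C. \<forall>B\<in>Ob C. \<forall>V\<in>Ob C. \<forall>W\<in>Ob C. \<forall>f\<in>hom C A B.
        Le C W V \<and> Le C V B \<longrightarrow>
          CObj C (CMor C f V) W = CObj C f W \<and> CMor C (CMor C f V) W = CMor C f W)
   \<comment> \<open>P.6\<close>
   \<and> (\<forall>A\<in>Ob C. \<forall>B\<in>Ob C. \<forall>D\<in>Ob C. \<forall>W\<in>Ob C. \<forall>f\<in>hom C A B. \<forall>g\<in>hom C B D.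
        Le C W D \<longrightarrow>
          CObj C f (CObj C g W) = CObj C (Cmp C f g) W
        \<and> Cmp C (CMor C f (CObj C g W)) (CMor C g W) = CMor C (Cmp C f g) W)
   \<comment> \<open>P.7\<close>
   \<and> (\<forall>A\<in>Ob C. \<forall>B\<in>Ob C. \<forall>V\<in>Ob C. \<forall>f\<in>hom C A B. Le C V B \<longrightarrow>
          CObj C (Res C f (CObj C f V)) V = CObj C f V
        \<and> CMor C (Res C f (CObj C f V)) V = CMor C f V)
   \<comment> \<open>P.8\<close>
   \<and> (\<forall>A\<in>Ob C. \<forall>B\<in>Ob C. \<forall>D\<in>Ob C. \<forall>V\<in>Ob C. \<forall>f\<in>hom C A B. \<forall>g\<in>hom C B D.
        Le C V B \<longrightarrow>
          Res C (Cmp C f g) (CObj C f V) = Cmp C (CMor C f V) (Res C g V))"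

definition monic :: "('o, 'm, 'x) cat_scheme \<Rightarrow> 'm \<Rightarrow> bool" where
  "monic C m \<longleftrightarrow> (\<forall>g\<in>Ar C. \<forall>h\<in>Ar C.
      Cod C g = Dom C m \<and> Cod C h = Dom C m \<and> Dom C g = Dom C h \<and> Cmp C g m = Cmp C h m
      \<longrightarrow> g = h)"

definition is_pullback ::
  "('o, 'm, 'x) cat_scheme \<Rightarrow> 'm \<Rightarrow> 'm \<Rightarrow> 'm \<Rightarrow> 'm \<Rightarrow> bool" where
  "is_pullback C m f m' f' \<longleftrightarrow>
     m \<in> Ar C \<and> f \<in> Ar C \<and> m' \<in> Ar C \<and> f' \<in> Ar C
   \<and> Cod C f = Cod C m \<and> Dom C m' = Dom C f' \<and> Cod C m' = Dom C f \<and> Cod C f' = Dom C m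
   \<and> Cmp C m' f = Cmp C f' m
   \<and> (\<forall>p\<in>Ar C. \<forall>q\<in>Ar C. Dom C p = Dom C q \<and> Cod C p = Dom C f \<and> Cod C q = Dom C m
        \<and> Cmp C p f = Cmp C q m \<longrightarrow>
        (\<exists>!u. u \<in> hom C (Dom C p) (Dom C m') \<and> Cmp C u m' = p \<and> Cmp C u f' = q))"

definition inclusion_system :: "('o, 'm, 'x) cat_scheme \<Rightarrow> 'm set \<Rightarrow> bool" where
  "inclusion_system C N \<longleftrightarrow> N \<subseteq> Ar C
   \<and> (\<forall>A\<in>Ob C. Id C A \<in> N)
   \<and> (\<forall>m\<in>N. monic C m)
   \<and> (\<forall>m\<in>N. \<forall>n\<in>N. Dom C m = Dom C n \<and> Cod C m = Cod C n \<longrightarrow> m = n)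
   \<and> (\<forall>m\<in>N. \<forall>n\<in>N. Cod C m = Dom C n \<longrightarrow> Cmp C m n \<in> N)
   \<and> (\<forall>m\<in>N. \<forall>f\<in>Ar C. Cod C f = Cod C m \<longrightarrow>
        (\<exists>m' f'. is_pullback C m f m' f' \<and> m' \<in> N))"

end

theory Submission
  imports Defs
begin

locale pc_loc =
  fixes C :: "('o, 'm, 'x) pcat_scheme"
  assumes pc: "partial_category C"
begin

lemmas pcu = pc[unfolded partial_category_def]
lemmas pc0 = pcu[THEN conjunct1]
lemmas pc1 = pcu[THEN conjunct2, THEN conjunct1]
lemmas pc2 = pcu[THEN conjunct2, THEN conjunct2, THEN conjunct1]
lemmas pc3 = pcu[THEN conjunct2, THEN conjunct2, THEN conjunct2, THEN conjunct1]
lemmas pc4 = pcu[THEN conjunct2, THEN conjunct2, THEN conjunct2, THEN conjunct2, THEN conjunct1]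
lemmas pc5 = pcu[THEN conjunct2, THEN conjunct2, THEN conjunct2, THEN conjunct2, THEN conjunct2, THEN conjunct1]
lemmas pc6 = pcu[THEN conjunct2, THEN conjunct2, THEN conjunct2, THEN conjunct2, THEN conjunct2, THEN conjunct2, THEN conjunct1]
lemmas pc7 = pcu[THEN conjunct2, THEN conjunct2, THEN conjunct2, THEN conjunct2, THEN conjunct2, THEN conjunct2, THEN conjunct2, THEN conjunct1]
lemmas pc8 = pcu[THEN conjunct2, THEN conjunct2, THEN conjunct2, THEN conjunct2, THEN conjunct2, THEN conjunct2, THEN conjunct2, THEN conjunct2, THEN conjunct1]
lemmas pc9 = pcu[THEN conjunct2, THEN conjunct2, THEN conjunct2, THEN conjunct2, THEN conjunct2, THEN conjunct2, THEN conjunct2, THEN conjunct2, THEN conjunct2, THEN conjunct1]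
lemmas pc10 = pcu[THEN conjunct2, THEN conjunct2, THEN conjunct2, THEN conjunct2, THEN conjunct2, THEN conjunct2, THEN conjunct2, THEN conjunct2, THEN conjunct2, THEN conjunct2, THEN conjunct1]
lemmas pc11 = pcu[THEN conjunct2, THEN conjunct2, THEN conjunct2, THEN conjunct2, THEN conjunct2, THEN conjunct2, THEN conjunct2, THEN conjunct2, THEN conjunct2, THEN conjunct2, THEN conjunct2, THEN conjunct1]
lemmas pc12 = pcu[THEN conjunct2, THEN conjunct2, THEN conjunct2, THEN conjunct2, THEN conjunct2, THEN conjunct2, THEN conjunct2, THEN conjunct2, THEN conjunct2, THEN conjunct2, THEN conjunct2, THEN conjunct2, THEN conjunct1]
lemmas pc13 = pcu[THEN conjunct2, THEN conjunct2, THEN conjunct2, THEN conjunct2, THEN conjunct2, THEN conjunct2, THEN conjunct2, THEN conjunct2, THEN conjunct2, THEN conjunct2, THEN conjunct2, THEN conjunct2, THEN conjunct2, THEN conjunct1]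
lemmas pc14 = pcu[THEN conjunct2, THEN conjunct2, THEN conjunct2, THEN conjunct2, THEN conjunct2, THEN conjunct2, THEN conjunct2, THEN conjunct2, THEN conjunct2, THEN conjunct2, THEN conjunct2, THEN conjunct2, THEN conjunct2, THEN conjunct2]

lemma cat: "category C" using pc0 .

lemma dom_ob: "f \<in> Ar C \<Longrightarrow> Dom C f \<in> Ob C \<and> Cod C f \<in> Ob C"
  using cat unfolding category_def by blast
lemma id_hom: "A \<in> Ob C \<Longrightarrow> Id C A \<in> hom C A A"
  using cat unfolding category_def by blast
lemma cmp_hom: "f \<in> hom C A B \<Longrightarrow> g \<in> hom C B D \<Longrightarrow> Cmp C f g \<in> hom C A D"
  using cat unfolding category_def hom_def by auto
lemma id_right: "f \<in> hom C A B \<Longrightarrow> Cmp C f (Id C B) = f"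
  using cat unfolding category_def hom_def by auto
lemma id_left: "f \<in> hom C A B \<Longrightarrow> Cmp C (Id C A) f = f"
  using cat unfolding category_def hom_def by auto
lemma hom_ob: "f \<in> hom C A B \<Longrightarrow> A \<in> Ob C \<and> B \<in> Ob C"
  using dom_ob unfolding hom_def by auto

lemma le_trans: "A \<in> Ob C \<Longrightarrow> B \<in> Ob C \<Longrightarrow> D \<in> Ob C \<Longrightarrow> Le C A B \<Longrightarrow> Le C B D \<Longrightarrow> Le C A D"
  using pc3 by blast
lemma res_hom: "f \<in> hom C A B \<Longrightarrow> U \<in> Ob C \<Longrightarrow> Le C U A \<Longrightarrow> Res C f U \<in> hom C U B"
  using pc4 hom_ob by blast
lemma con_hom: "f \<in> hom C A B \<Longrightarrow> V \<in> Ob C \<Longrightarrow> Le C V B \<Longrightarrow>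
        CObj C f V \<in> Ob C \<and> Le C (CObj C f V) A \<and> CMor C f V \<in> hom C (CObj C f V) V"
  using pc5 hom_ob by blast
lemma P1: "f \<in> hom C A B \<Longrightarrow> Res C f A = f"
  using pc6 hom_ob by blast
lemma P2: "f \<in> hom C A B \<Longrightarrow> U \<in> Ob C \<Longrightarrow> V \<in> Ob C \<Longrightarrow> Le C V U \<Longrightarrow> Le C U A \<Longrightarrow>
   Res C (Res C f U) V = Res C f V"
  using pc7 hom_ob by blast
lemma P3: "f \<in> hom C A B \<Longrightarrow> g \<in> hom C B D \<Longrightarrow> U \<in> Ob C \<Longrightarrow> Le C U A \<Longrightarrow>
   Cmp C (Res C f U) g = Res C (Cmp C f g) U"
  using pc8 hom_ob by blast
lemma P4: "f \<in> hom C A B \<Longrightarrow> CObj C f B = A \<and> CMor C f B = f"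
  using pc9 hom_ob by blast
lemma P4': "A \<in> Ob C \<Longrightarrow> U \<in> Ob C \<Longrightarrow> Le C U A \<Longrightarrow> CObj C (Id C A) U = U \<and> CMor C (Id C A) U = Id C U"
  using pc10 by blast
lemma P6: "f \<in> hom C A B \<Longrightarrow> g \<in> hom C B D \<Longrightarrow> W \<in> Ob C \<Longrightarrow> Le C W D \<Longrightarrow>
          CObj C f (CObj C g W) = CObj C (Cmp C f g) W
        \<and> Cmp C (CMor C f (CObj C g W)) (CMor C g W) = CMor C (Cmp C f g) W"
  using pc12 hom_ob by blast
lemma P7: "f \<in> hom C A B \<Longrightarrow> V \<in> Ob C \<Longrightarrow> Le C V B \<Longrightarrow>
          CObj C (Res C f (CObj C f V)) V = CObj C f V
        \<and> CMor C (Res C f (CObj C f V)) V = CMor C f V"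
  using pc13 hom_ob by blast
lemma P8: "f \<in> hom C A B \<Longrightarrow> g \<in> hom C B D \<Longrightarrow> V \<in> Ob C \<Longrightarrow> Le C V B \<Longrightarrow>
          Res C (Cmp C f g) (CObj C f V) = Cmp C (CMor C f V) (Res C g V)"
  using pc14 hom_ob by blast

lemma inc_hom: "A \<in> Ob C \<Longrightarrow> U \<in> Ob C \<Longrightarrow> Le C U A \<Longrightarrow> Res C (Id C A) U \<in> hom C U A"
  using res_hom id_hom by blast

lemma inc_con: assumes "A \<in> Ob C" "U \<in> Ob C" "Le C U A"
  shows "CObj C (Res C (Id C A) U) U = U \<and> CMor C (Res C (Id C A) U) U = Id C U"
  using P7[OF id_hom[OF assms(1)] assms(2,3)] P4'[OF assms] by simp

lemma cancel: assumes "A \<in> Ob C" "U \<in> Ob C" "Le C U A" "g \<in> hom C X U"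
  shows "CMor C (Cmp C g (Res C (Id C A) U)) U = g"
proof -
  have "Cmp C (CMor C g (CObj C (Res C (Id C A) U) U)) (CMor C (Res C (Id C A) U) U)
        = CMor C (Cmp C g (Res C (Id C A) U)) U"
    using P6[OF assms(4) inc_hom[OF assms(1-3)] assms(2,3)] by blast
  then show ?thesis using inc_con[OF assms(1-3)] P4[OF assms(4)] id_right[OF assms(4)] by simp
qed

lemma cobj_cancel: assumes "A \<in> Ob C" "U \<in> Ob C" "Le C U A" "g \<in> hom C X U"
  shows "CObj C (Cmp C g (Res C (Id C A) U)) U = X"
  using P6[OF assms(4) inc_hom[OF assms(1-3)] assms(2,3)] inc_con[OF assms(1-3)] P4[OF assms(4)] by simp

lemma inc_monic: assumes "A \<in> Ob C" "U \<in> Ob C" "Le C U A"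
  shows "monic C (Res C (Id C A) U)"
  unfolding monic_def
proof (intro ballI impI)
  fix g h assume g: "g \<in> Ar C" and h: "h \<in> Ar C" and e: "Cod C g = Dom C (Res C (Id C A) U) \<and>
    Cod C h = Dom C (Res C (Id C A) U) \<and> Dom C g = Dom C h \<and>
    Cmp C g (Res C (Id C A) U) = Cmp C h (Res C (Id C A) U)"
  have d: "Dom C (Res C (Id C A) U) = U" using inc_hom[OF assms] unfolding hom_def by simp
  have "g \<in> hom C (Dom C g) U" "h \<in> hom C (Dom C g) U" using g h e d unfolding hom_def by auto
  then show "g = h" using cancel[OF assms] e by metis
qed

lemma inc_pullback: assumes A: "A \<in> Ob C" and U: "U \<in> Ob C" and UA: "Le C U A"
  and f: "f \<in> Ar C" and cf: "Cod C f = A"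
  shows "is_pullback C (Res C (Id C A) U) f (Res C (Id C (Dom C f)) (CObj C f U)) (CMor C f U)"
proof -
  define X where "X = Dom C f"
  define D where "D = CObj C f U"
  define m where "m = Res C (Id C A) U"
  have fh: "f \<in> hom C X A" using f cf unfolding X_def hom_def by auto
  have X: "X \<in> Ob C" using hom_ob[OF fh] by simp
  have Dc: "D \<in> Ob C" "Le C D X" "CMor C f U \<in> hom C D U" using con_hom[OF fh U UA] unfolding D_def by auto
  have mh: "m \<in> hom C U A" unfolding m_def using inc_hom[OF A U UA] .
  have m'h: "Res C (Id C X) D \<in> hom C D X" using inc_hom[OF X Dc(1,2)] .
  have comm: "Cmp C (Res C (Id C X) D) f = Cmp C (CMor C f U) m"
  proof -
    have "Cmp C (Res C (Id C X) D) f = Res C (Cmp C (Id C X) f) D" using P3[OF id_hom[OF X] fh Dc(1,2)] .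
    also have "\<dots> = Res C f D" using id_left[OF fh] by simp
    also have "\<dots> = Res C (Cmp C f (Id C A)) D" using id_right[OF fh] by simp
    also have "\<dots> = Cmp C (CMor C f U) m" using P8[OF fh id_hom[OF A] U UA] unfolding D_def m_def .
    finally show ?thesis .
  qed
  have univ: "\<exists>!u. u \<in> hom C (Dom C p) (Dom C (Res C (Id C X) D)) \<and> Cmp C u (Res C (Id C X) D) = p
                \<and> Cmp C u (CMor C f U) = q"
    if p: "p \<in> Ar C" and q: "q \<in> Ar C" and pq: "Dom C p = Dom C q \<and> Cod C p = Dom C f \<and> Cod C q = Dom C m
        \<and> Cmp C p f = Cmp C q m" for p q
  proof -
    define Y where "Y = Dom C p"
    have dm: "Dom C m = U" using mh unfolding hom_def by simp
    have dm': "Dom C (Res C (Id C X) D) = D" using m'h unfolding hom_def by simp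
    have ph: "p \<in> hom C Y X" using p pq unfolding Y_def X_def hom_def by auto
    have qh: "q \<in> hom C Y U" using q pq dm unfolding Y_def hom_def by auto
    have cp: "CObj C p D = Y"
    proof -
      have "CObj C p D = CObj C (Cmp C p f) U" using P6[OF ph fh U UA] unfolding D_def by blast
      also have "\<dots> = CObj C (Cmp C q m) U" using pq by simp
      also have "\<dots> = Y" using cobj_cancel[OF A U UA qh] unfolding m_def .
      finally show ?thesis .
    qed
    define u where "u = CMor C p D"
    have uh: "u \<in> hom C Y D" using con_hom[OF ph Dc(1,2)] cp unfolding u_def by simp
    have u1: "Cmp C u (Res C (Id C X) D) = p"
    proof -
      have "Res C (Cmp C p (Id C X)) (CObj C p D) = Cmp C u (Res C (Id C X) D)"
        using P8[OF ph id_hom[OF X] Dc(1,2)] unfolding u_def .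
      then show ?thesis using cp id_right[OF ph] P1[OF ph] by simp
    qed
    have u2: "Cmp C u (CMor C f U) = q"
    proof -
      have "Cmp C u (CMor C f U) = CMor C (Cmp C p f) U" using P6[OF ph fh U UA] unfolding u_def D_def by blast
      also have "\<dots> = CMor C (Cmp C q m) U" using pq by simp
      also have "\<dots> = q" using cancel[OF A U UA qh] unfolding m_def .
      finally show ?thesis .
    qed
    show ?thesis
    proof (rule ex1I[of _ u])
      show "u \<in> hom C (Dom C p) (Dom C (Res C (Id C X) D)) \<and> Cmp C u (Res C (Id C X) D) = p
                \<and> Cmp C u (CMor C f U) = q" using uh u1 u2 dm' unfolding Y_def by simp
    next
      fix v assume v: "v \<in> hom C (Dom C p) (Dom C (Res C (Id C X) D)) \<and> Cmp C v (Res C (Id C X) D) = p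
                \<and> Cmp C v (CMor C f U) = q"
      have mon: "monic C (Res C (Id C X) D)" using inc_monic[OF X Dc(1,2)] .
      show "v = u" using mon v uh u1 dm' unfolding monic_def hom_def Y_def by auto
    qed
  qed
  show ?thesis unfolding is_pullback_def
    using mh m'h Dc(3) f cf comm univ unfolding hom_def m_def X_def D_def by auto
qed

end

theorem proposition11p12:
  assumes "partial_category C"
  shows "inclusion_system C {Res C (Id C A) U | A U. A \<in> Ob C \<and> U \<in> Ob C \<and> Le C U A}"
proof -
  interpret pc_loc C using assms by unfold_locales
  let ?N = "{Res C (Id C A) U | A U. A \<in> Ob C \<and> U \<in> Ob C \<and> Le C U A}"
  have refl: "\<And>A. A \<in> Ob C \<Longrightarrow> Le C A A" using pc1 by blast
  have mem: "\<And>A U. A \<in> Ob C \<Longrightarrow> U \<in> Ob C \<Longrightarrow> Le C U A \<Longrightarrow> Res C (Id C A) U \<in> ?N" by blast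
  have i1: "?N \<subseteq> Ar C" using inc_hom unfolding hom_def by blast
  have i2: "\<forall>A\<in>Ob C. Id C A \<in> ?N"
  proof
    fix A assume A: "A \<in> Ob C"
    have "Res C (Id C A) A = Id C A" using P1[OF id_hom[OF A]] .
    then show "Id C A \<in> ?N" using mem[OF A A refl[OF A]] by simp
  qed
  have i3: "\<forall>m\<in>?N. monic C m" using inc_monic by blast
  have i4: "\<forall>m\<in>?N. \<forall>n\<in>?N. Dom C m = Dom C n \<and> Cod C m = Cod C n \<longrightarrow> m = n"
  proof (intro ballI impI)
    fix m n assume "m \<in> ?N" "n \<in> ?N" and e: "Dom C m = Dom C n \<and> Cod C m = Cod C n"
    then obtain A U B V where m: "m = Res C (Id C A) U" "A \<in> Ob C" "U \<in> Ob C" "Le C U A"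
      and n: "n = Res C (Id C B) V" "B \<in> Ob C" "V \<in> Ob C" "Le C V B" by blast
    show "m = n" using e inc_hom[OF m(2-4)] inc_hom[OF n(2-4)] m(1) n(1) unfolding hom_def by auto
  qed
  have i5: "\<forall>m\<in>?N. \<forall>n\<in>?N. Cod C m = Dom C n \<longrightarrow> Cmp C m n \<in> ?N"
  proof (intro ballI impI)
    fix m n assume "m \<in> ?N" "n \<in> ?N" and e: "Cod C m = Dom C n"
    then obtain A U B V where m: "m = Res C (Id C A) U" "A \<in> Ob C" "U \<in> Ob C" "Le C U A"
      and n: "n = Res C (Id C B) V" "B \<in> Ob C" "V \<in> Ob C" "Le C V B" by blast
    have AV: "A = V" using e inc_hom[OF m(2-4)] inc_hom[OF n(2-4)] m(1) n(1) unfolding hom_def by auto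
    have UB: "Le C U B" using le_trans[OF m(3) n(3) n(2)] m(4) n(4) AV by simp
    have "Cmp C m n = Res C (Cmp C (Id C A) n) U"
      using P3[OF id_hom[OF m(2)] _ m(3,4)] inc_hom[OF n(2-4)] AV m(1) n(1) by simp
    also have "\<dots> = Res C n U" using id_left[OF inc_hom[OF n(2-4)]] AV n(1) by simp
    also have "\<dots> = Res C (Id C B) U" using P2[OF id_hom[OF n(2)] n(3) m(3)] m(4) n(4) AV n(1) by simp
    finally show "Cmp C m n \<in> ?N" using mem[OF n(2) m(3) UB] by simp
  qed
  have i6: "\<forall>m\<in>?N. \<forall>f\<in>Ar C. Cod C f = Cod C m \<longrightarrow>
        (\<exists>m' f'. is_pullback C m f m' f' \<and> m' \<in> ?N)"
  proof (intro ballI impI)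
    fix m f assume "m \<in> ?N" and f: "f \<in> Ar C" and e: "Cod C f = Cod C m"
    then obtain A U where m: "m = Res C (Id C A) U" "A \<in> Ob C" "U \<in> Ob C" "Le C U A" by blast
    have cf: "Cod C f = A" using e inc_hom[OF m(2-4)] m(1) unfolding hom_def by simp
    have fh: "f \<in> hom C (Dom C f) A" using f cf unfolding hom_def by simp
    have c: "CObj C f U \<in> Ob C" "Le C (CObj C f U) (Dom C f)" using con_hom[OF fh m(3,4)] by auto
    show "\<exists>m' f'. is_pullback C m f m' f' \<and> m' \<in> ?N"
      using inc_pullback[OF m(2-4) f cf] mem[OF hom_ob[OF fh, THEN conjunct1] c] m(1) by blast
  qed
  show ?thesis unfolding inclusion_system_def using i1 i2 i3 i4 i5 i6 by blast
qed

end
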